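(* For any optimal packing of a finite multiset of items into a finite sequence of bins, there is an optimal thrifty packing of those items into that sequence that uses the same set of bins.
   Context: Grid Scheduling setting: items have positive integer sizes; bins have positive integer sizes and form a sequence. A packing assigns every item to a bin such that the total size of items in each bin is at most the bin's size. A bin is used if it receives at least one item; the cost of a packing is the sum of the sizes of its used bins. A packing is valid if each empty bin is smaller than every item packed in a later bin. A packing is optimal if it is valid and has minimum cost among all valid packings of the same items into the same sequence. A bin is wasteful if its empty space is at least the size of some item packed in a later bin; a packing is thrifty if it has no wasteful bin. *)

theory Defs
  imports Main
begin

text \<open>Items are given by a list of sizes (item i has size items ! i; the list
represents the multiset, with items distinguished by position); bins are given by
a list of sizes (bin j has size bins ! j, in sequence order).\<close>

definition load :: "nat list \<Rightarrow> (nat \<Rightarrow> nat) \<Rightarrow> nat \<Rightarrow> nat" where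
  "load items p j = (\<Sum>i\<in>{i. i < length items \<and> p i = j}. items ! i)"

definition is_packing :: "nat list \<Rightarrow> nat list \<Rightarrow> (nat \<Rightarrow> nat) \<Rightarrow> bool" where
  "is_packing bins items p \<longleftrightarrow>
     (\<forall>i<length items. p i < length bins) \<and>
     (\<forall>j<length bins. load items p j \<le> bins ! j)"

definition used_bins :: "nat list \<Rightarrow> nat list \<Rightarrow> (nat \<Rightarrow> nat) \<Rightarrow> nat set" where
  "used_bins bins items p = {j. j < length bins \<and> (\<exists>i<length items. p i = j)}"

definition cost :: "nat list \<Rightarrow> nat list \<Rightarrow> (nat \<Rightarrow> nat) \<Rightarrow> nat" where
  "cost bins items p = (\<Sum>j\<in>used_bins bins items p. bins ! j)"

definition valid_packing :: "nat list \<Rightarrow> nat list \<Rightarrow> (nat \<Rightarrow> nat) \<Rightarrow> bool" where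
  "valid_packing bins items p \<longleftrightarrow> is_packing bins items p \<and>
     (\<forall>j<length bins. j \<notin> used_bins bins items p \<longrightarrow>
        (\<forall>i<length items. j < p i \<longrightarrow> bins ! j < items ! i))"

definition optimal_packing :: "nat list \<Rightarrow> nat list \<Rightarrow> (nat \<Rightarrow> nat) \<Rightarrow> bool" where
  "optimal_packing bins items p \<longleftrightarrow> valid_packing bins items p \<and>
     (\<forall>q. valid_packing bins items q \<longrightarrow> cost bins items p \<le> cost bins items q)"

definition wasteful :: "nat list \<Rightarrow> nat list \<Rightarrow> (nat \<Rightarrow> nat) \<Rightarrow> nat \<Rightarrow> bool" where
  "wasteful bins items p j \<longleftrightarrow>
     (\<exists>i<length items. j < p i \<and> items ! i \<le> bins ! j - load items p j)"

definition thrifty :: "nat list \<Rightarrow> nat list \<Rightarrow> (nat \<Rightarrow> nat) \<Rightarrow> bool" where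
  "thrifty bins items p \<longleftrightarrow> (\<forall>j<length bins. \<not> wasteful bins items p j)"

end

theory Submission
  imports Defs
begin

lemma load_upd_same:
  assumes "i < length items" "q i \<noteq> j"
  shows "load items (q(i:=j)) j = load items q j + items ! i"
proof -
  have "{i'. i' < length items \<and> (q(i:=j)) i' = j} = insert i {i'. i' < length items \<and> q i' = j}"
    using assms by auto
  moreover have "i \<notin> {i'. i' < length items \<and> q i' = j}" using assms by auto
  ultimately show ?thesis unfolding load_def by simp
qed

lemma load_upd_other:
  assumes "k \<noteq> j"
  shows "load items (q(i:=j)) k \<le> load items q k"
proof -
  have "{i'. i' < length items \<and> (q(i:=j)) i' = k} \<subseteq> {i'. i' < length items \<and> q i' = k}"
    using assms by auto
  then show ?thesis unfolding load_def by (intro sum_mono2) auto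
qed

lemma load_empty:
  assumes "\<forall>i<length items. q i \<noteq> j"
  shows "load items q j = 0"
  using assms unfolding load_def by auto

theorem corollary1:
  fixes bins items :: "nat list" and p :: "nat \<Rightarrow> nat"
  assumes "\<forall>b\<in>set bins. 0 < b"
    and "\<forall>x\<in>set items. 0 < x"
    and "optimal_packing bins items p"
  shows "\<exists>q. optimal_packing bins items q \<and> thrifty bins items q \<and>
             used_bins bins items q = used_bins bins items p"
proof -
  define U where "U = used_bins bins items p"
  define n where "n = length items"
  define S where "S = (\<lambda>q. is_packing bins items q \<and> (\<forall>i<n. q i \<in> U) \<and>
      (\<forall>e<length bins. e \<notin> U \<longrightarrow> (\<forall>i<n. e < q i \<longrightarrow> bins ! e < items ! i)))"
  have vp: "valid_packing bins items p" using assms(3) unfolding optimal_packing_def by auto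
  have "S p" using vp unfolding S_def valid_packing_def U_def used_bins_def is_packing_def n_def
    by auto
  then obtain q where Sq: "S q" and qmin: "\<And>q'. S q' \<Longrightarrow> (\<Sum>i<n. q i) \<le> (\<Sum>i<n. q' i)"
    using ex_has_least_nat[of S p "\<lambda>q. \<Sum>i<n. q i"] by blast
  have qpack: "is_packing bins items q" and qU: "\<forall>i<n. q i \<in> U"
    and qV: "\<forall>e<length bins. e \<notin> U \<longrightarrow> (\<forall>i<n. e < q i \<longrightarrow> bins ! e < items ! i)"
    using Sq unfolding S_def by auto
  have Ulen: "U \<subseteq> {..<length bins}" unfolding U_def used_bins_def by auto
  have nomove: False if i: "i < n" and j: "j \<in> U" and ji: "j < q i"
      and fit: "items ! i \<le> bins ! j - load items q j" for i j
  proof -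
    define q' where "q' = q(i:=j)"
    have jl: "j < length bins" using j Ulen by auto
    have ld: "load items q j \<le> bins ! j" using qpack jl unfolding is_packing_def by auto
    have "is_packing bins items q'"
      unfolding is_packing_def
    proof (intro conjI allI impI)
      fix k assume "k < length bins"
      show "load items q' k \<le> bins ! k"
      proof (cases "k = j")
        case True
        then show ?thesis using load_upd_same[of i items q j] i ji fit ld unfolding q'_def n_def
          by auto
      next
        case False
        then show ?thesis using load_upd_other[of k j items q i] qpack \<open>k < length bins\<close>
          unfolding q'_def is_packing_def by fastforce
      qed
    next
      fix i' assume "i' < length items"
      then show "q' i' < length bins" using qpack jl unfolding q'_def is_packing_def by auto
    qed
    moreover have "\<forall>i'<n. q' i' \<in> U" using qU j unfolding q'_def by auto
    moreover have "\<forall>e<length bins. e \<notin> U \<longrightarrow> (\<forall>i'<n. e < q' i' \<longrightarrow> bins ! e < items ! i')"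
      using qV ji unfolding q'_def by (metis fun_upd_apply order.strict_trans)
    ultimately have "S q'" unfolding S_def by auto
    then have "(\<Sum>i<n. q i) \<le> (\<Sum>i<n. q' i)" by (rule qmin)
    moreover have "(\<Sum>i<n. q' i) < (\<Sum>i<n. q i)"
      by (rule sum_strict_mono_ex1) (use i ji in \<open>auto simp: q'_def\<close>)
    ultimately show False by simp
  qed
  have thr: "thrifty bins items q"
    unfolding thrifty_def wasteful_def
  proof (intro allI impI notI)
    fix j assume jl: "j < length bins"
      and "\<exists>i<length items. j < q i \<and> items ! i \<le> bins ! j - load items q j"
    then obtain i where i: "i < n" "j < q i" "items ! i \<le> bins ! j - load items q j"
      unfolding n_def by auto
    show False
    proof (cases "j \<in> U")
      case True then show ?thesis using nomove i by blast
    next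
      case False
      then have "\<forall>i<length items. q i \<noteq> j" using qU unfolding n_def by auto
      then have "load items q j = 0" by (rule load_empty)
      then show ?thesis using qV jl False i by fastforce
    qed
  qed
  have usub: "used_bins bins items q \<subseteq> U"
    using qU unfolding used_bins_def n_def by auto
  have qvalid: "valid_packing bins items q"
    unfolding valid_packing_def
  proof (intro conjI qpack allI impI)
    fix e i assume el: "e < length bins" and enu: "e \<notin> used_bins bins items q"
      and il: "i < length items" and ei: "e < q i"
    show "bins ! e < items ! i"
    proof (cases "e \<in> U")
      case False then show ?thesis using qV el il ei unfolding n_def by auto
    next
      case True
      have "\<forall>i<length items. q i \<noteq> e" using enu el unfolding used_bins_def by auto
      then have "load items q e = 0" by (rule load_empty)
      show ?thesis
      proof (rule ccontr)
        assume "\<not> bins ! e < items ! i"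
        then show False using nomove[of i e] il ei True \<open>load items q e = 0\<close>
          unfolding n_def by auto
      qed
    qed
  qed
  have costle: "cost bins items p \<le> cost bins items q"
    using assms(3) qvalid unfolding optimal_packing_def by auto
  have ueq: "used_bins bins items q = U"
  proof (rule ccontr)
    assume "used_bins bins items q \<noteq> U"
    then obtain u where u: "u \<in> U" "u \<notin> used_bins bins items q" using usub by auto
    have fU: "finite U" using Ulen finite_subset by blast
    have pos: "0 < bins ! u" using assms(1) u Ulen by auto
    have "cost bins items q + bins ! u = (\<Sum>j\<in>insert u (used_bins bins items q). bins ! j)"
      unfolding cost_def using u fU usub by (subst sum.insert) (auto intro: finite_subset)
    also have "\<dots> \<le> (\<Sum>j\<in>U. bins ! j)"
      using u usub fU by (intro sum_mono2) auto
    also have "\<dots> = cost bins items p" unfolding cost_def U_def ..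
    finally show False using costle pos by simp
  qed
  have "optimal_packing bins items q"
    using assms(3) qvalid costle ueq unfolding optimal_packing_def cost_def U_def by auto
  then show ?thesis using thr ueq unfolding U_def by blast
qed

end
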